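(* Let $\kappa$ be a cardinal with $\mathrm{cf}(\kappa)>\aleph_1$, and let $\mathcal{R}$ be any collection of $\kappa$ pairwise disjoint rays belonging to an end $\varepsilon$ of a graph $G$. Then there exist a set $U$ of vertices of $G$ with $|U|<\kappa$ and a collection $\mathcal{C}$ of $\kappa$ internally disjoint $\varepsilon$--$U$ combs in $G$ all of whose spines lie in $\mathcal{R}$.
   Context: A ray is a one-way infinite path; two rays are equivalent if there are infinitely many disjoint paths between them; an end is an equivalence class of rays. An $\varepsilon$--$U$ comb is a subgraph $C=R\cup\bigcup\mathcal{P}$ of $G$ consisting of a ray $R$ (its spine) disjoint from $U$ and belonging to $\varepsilon$, and an infinite family $\mathcal{P}$ of disjoint $R$--$U$ paths; its interior is $C-U$; two such combs are internally disjoint if their interiors are disjoint. *)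

theory Defs
  imports Main
begin

definition graph :: "'v set \<Rightarrow> ('v \<Rightarrow> 'v \<Rightarrow> bool) \<Rightarrow> bool" where
  "graph V E \<longleftrightarrow> (\<forall>x y. E x y \<longrightarrow> x \<in> V \<and> y \<in> V \<and> x \<noteq> y \<and> E y x)"

definition is_ray :: "'v set \<Rightarrow> ('v \<Rightarrow> 'v \<Rightarrow> bool) \<Rightarrow> (nat \<Rightarrow> 'v) \<Rightarrow> bool" where
  "is_ray V E R \<longleftrightarrow> inj R \<and> (\<forall>n. R n \<in> V) \<and> (\<forall>n. E (R n) (R (Suc n)))"

definition is_path :: "'v set \<Rightarrow> ('v \<Rightarrow> 'v \<Rightarrow> bool) \<Rightarrow> 'v list \<Rightarrow> bool" where
  "is_path V E p \<longleftrightarrow> p \<noteq> [] \<and> distinct p \<and> set p \<subseteq> V \<and>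
     (\<forall>i. Suc i < length p \<longrightarrow> E (p ! i) (p ! Suc i))"

definition AB_path :: "'v set \<Rightarrow> ('v \<Rightarrow> 'v \<Rightarrow> bool) \<Rightarrow> 'v set \<Rightarrow> 'v set \<Rightarrow> 'v list \<Rightarrow> bool" where
  "AB_path V E A B p \<longleftrightarrow> is_path V E p \<and> set p \<inter> A = {hd p} \<and> set p \<inter> B = {last p}"

definition disjoint_paths :: "'v list set \<Rightarrow> bool" where
  "disjoint_paths P \<longleftrightarrow> (\<forall>p\<in>P. \<forall>q\<in>P. p \<noteq> q \<longrightarrow> set p \<inter> set q = {})"

definition rays_equiv :: "'v set \<Rightarrow> ('v \<Rightarrow> 'v \<Rightarrow> bool) \<Rightarrow> (nat \<Rightarrow> 'v) \<Rightarrow> (nat \<Rightarrow> 'v) \<Rightarrow> bool" where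
  "rays_equiv V E R1 R2 \<longleftrightarrow> (\<exists>P. infinite P \<and> disjoint_paths P \<and>
      (\<forall>p\<in>P. AB_path V E (range R1) (range R2) p))"

definition is_end :: "'v set \<Rightarrow> ('v \<Rightarrow> 'v \<Rightarrow> bool) \<Rightarrow> (nat \<Rightarrow> 'v) set \<Rightarrow> bool" where
  "is_end V E \<epsilon> \<longleftrightarrow> (\<exists>R0. is_ray V E R0 \<and> \<epsilon> = {R. is_ray V E R \<and> rays_equiv V E R0 R})"

text \<open>An \<open>\<epsilon>\<close>--U comb, represented by its spine R and its family of teeth paths P;
  the comb itself is the subgraph R \<union> \<Union>P.\<close>
definition is_comb :: "'v set \<Rightarrow> ('v \<Rightarrow> 'v \<Rightarrow> bool) \<Rightarrow> (nat \<Rightarrow> 'v) set \<Rightarrow> 'v set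
    \<Rightarrow> (nat \<Rightarrow> 'v) \<times> 'v list set \<Rightarrow> bool" where
  "is_comb V E \<epsilon> U C \<longleftrightarrow> (case C of (R, P) \<Rightarrow>
     R \<in> \<epsilon> \<and> range R \<inter> U = {} \<and> infinite P \<and> disjoint_paths P \<and>
     (\<forall>p\<in>P. AB_path V E (range R) U p))"

definition comb_interior :: "'v set \<Rightarrow> (nat \<Rightarrow> 'v) \<times> 'v list set \<Rightarrow> 'v set" where
  "comb_interior U C = (case C of (R, P) \<Rightarrow> (range R \<union> \<Union>(set ` P)) - U)"

text \<open>cf(|A|) > aleph_1: no subset of size at most aleph_1 is cofinal in the
  initial well-order of A (card_of A).\<close>
definition cof_gt_aleph1 :: "'a set \<Rightarrow> bool" where
  "cof_gt_aleph1 A \<longleftrightarrow> \<not> (\<exists>S \<subseteq> A. (card_of S, cardSuc natLeq) \<in> ordLeq \<and>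
       (\<forall>a\<in>A. \<exists>b\<in>S. (a, b) \<in> card_of A))"

end

theory Submission
  imports Defs "HOL-Library.Countable_Set_Type"
begin

unbundle cardinal_syntax


lemma fin_less_inf: "finite A \<Longrightarrow> infinite C \<Longrightarrow> |A| <o |C|"
  using finite_ordLess_infinite[of "|A|" "|C|"] by (simp add: card_of_well_order_on Field_card_of)

lemma times_less:
  assumes inf: "infinite C" and a: "|A| <o |C|" and b: "|B| <o |C|"
  shows "|A \<times> B| <o |C|"
proof (cases "finite A \<and> finite B")
  case True then show ?thesis by (intro fin_less_inf[OF _ inf]) simp
next
  case False
  have tot: "|A| \<le>o |B| \<or> |B| \<le>o |A|" by (rule ordLeq_total[OF card_of_Well_order card_of_Well_order])
  show ?thesis
  proof (cases "A = {} \<or> B = {}")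
    case True then show ?thesis by (intro fin_less_inf[OF _ inf]) auto
  next
    case ne: False
    show ?thesis
    proof (cases "|A| \<le>o |B|")
      case True
      then have "infinite B" using False card_of_ordLeq_finite[OF True] by blast
      then have "|A \<times> B| =o |B|" using card_of_Times_infinite[of B A] True ne by simp
      then show ?thesis by (rule ordIso_ordLess_trans[OF _ b])
    next
      case f2: False
      then have ba: "|B| \<le>o |A|" using tot by simp
      then have "infinite A" using False card_of_ordLeq_finite[OF ba] by blast
      then have "|A \<times> B| =o |A|" using card_of_Times_infinite[of A B] ba ne by simp
      then show ?thesis by (rule ordIso_ordLess_trans[OF _ a])
    qed
  qed
qed

lemma UN_bound_less:
  assumes inf: "infinite C" and a: "|A| <o |C|" and d: "|D| <o |C|"
    and b: "\<And>a. a \<in> A \<Longrightarrow> |B a| \<le>o |D|"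
  shows "|\<Union>a\<in>A. B a| <o |C|"
proof -
  have 1: "|\<Union>a\<in>A. B a| \<le>o |SIGMA a:A. B a|" by (rule card_of_UNION_Sigma)
  have 2: "|SIGMA a:A. B a| \<le>o |SIGMA a:A. D|" using b by (intro card_of_Sigma_mono1) simp
  have "|\<Union>a\<in>A. B a| \<le>o |A \<times> D|" by (rule ordLeq_transitive[OF 1 2])
  then show ?thesis by (rule ordLeq_ordLess_trans[OF _ times_less[OF inf a d]])
qed


lemma wo_facts:
  shows "\<And>x. x \<in> I \<Longrightarrow> (x, x) \<in> card_of I"
    and "\<And>x y z. (x, y) \<in> card_of I \<Longrightarrow> (y, z) \<in> card_of I \<Longrightarrow> (x, z) \<in> card_of I"
    and "\<And>x y. x \<in> I \<Longrightarrow> y \<in> I \<Longrightarrow> x \<noteq> y \<Longrightarrow> (x, y) \<in> card_of I \<or> (y, x) \<in> card_of I"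
    and "\<And>x y. (x, y) \<in> card_of I \<Longrightarrow> (y, x) \<in> card_of I \<Longrightarrow> x = y"
proof -
  have w: "well_order_on I |I|" by (rule card_of_well_order_on)
  then have l: "linear_order_on I |I|" unfolding well_order_on_def by simp
  then have p: "partial_order_on I |I|" and t: "total_on I |I|" unfolding linear_order_on_def by simp_all
  then have pr: "preorder_on I |I|" and an: "antisym |I|" unfolding partial_order_on_def by simp_all
  then have r: "refl_on I |I|" and tr: "trans |I|" unfolding preorder_on_def by simp_all
  show "\<And>x. x \<in> I \<Longrightarrow> (x, x) \<in> card_of I" using r unfolding refl_on_def by blast
  show "\<And>x y z. (x, y) \<in> card_of I \<Longrightarrow> (y, z) \<in> card_of I \<Longrightarrow> (x, z) \<in> card_of I" using tr unfolding trans_def by blast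
  show "\<And>x y. x \<in> I \<Longrightarrow> y \<in> I \<Longrightarrow> x \<noteq> y \<Longrightarrow> (x, y) \<in> card_of I \<or> (y, x) \<in> card_of I"
    using t unfolding total_on_def by blast
  show "\<And>x y. (x, y) \<in> card_of I \<Longrightarrow> (y, x) \<in> card_of I \<Longrightarrow> x = y" using an unfolding antisym_def by blast
qed

lemma cof_basic:
  assumes cof: "cof_gt_aleph1 I"
  shows "cardSuc natLeq <o |I|" and "|UNIV::nat set| <o |I|" and "infinite I"
proof -
  have CS: "Card_order (cardSuc natLeq)" by (rule cardSuc_Card_order[OF natLeq_Card_order])
  have WS: "Well_order (cardSuc natLeq)" using CS card_order_on_well_order_on by blast
  have "\<not> |I| \<le>o cardSuc natLeq"
  proof
    assume h: "|I| \<le>o cardSuc natLeq"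
    have c: "\<forall>a\<in>I. \<exists>b\<in>I. (a, b) \<in> card_of I" using wo_facts(1)[of _ I] by blast
    have "\<exists>S\<subseteq>I. (card_of S, cardSuc natLeq) \<in> ordLeq \<and> (\<forall>a\<in>I. \<exists>b\<in>S. (a, b) \<in> card_of I)"
      using h c by (intro exI[of _ I] conjI subset_refl)
    then show False using cof unfolding cof_gt_aleph1_def by (elim notE)
  qed
  then show 1: "cardSuc natLeq <o |I|" by (rule not_ordLeq_iff_ordLess[OF WS card_of_Well_order, THEN iffD1])
  have "natLeq <o cardSuc natLeq" by (rule cardSuc_greater[OF natLeq_Card_order])
  then have "natLeq <o |I|" using 1 by (rule ordLess_transitive)
  then show 2: "|UNIV::nat set| <o |I|" by (rule ordIso_ordLess_trans[OF card_of_nat])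
  show "infinite I"
  proof
    assume "finite I"
    then have "finite (UNIV::nat set)" using card_of_ordLeq_finite[OF ordLess_imp_ordLeq[OF 2]] by blast
    then show False by simp
  qed
qed

lemma UN_small:
  assumes cof: "cof_gt_aleph1 I" and A: "|A| \<le>o cardSuc natLeq"
    and B: "\<And>a. a \<in> A \<Longrightarrow> |B a| <o |I|"
  shows "|\<Union>a\<in>A. B a| <o |I|"
proof -
  have "\<forall>a\<in>A. \<exists>c\<in>I. |B a| \<le>o |underS (card_of I) c|"
  proof
    fix a assume "a \<in> A"
    then have "|B a| <o |I|" by (rule B)
    then have "\<exists>c\<in>Field |I|. |B a| =o Restr (card_of I) (underS (card_of I) c)"
      by (rule ordLess_iff_ordIso_Restr[OF card_of_Well_order card_of_Well_order, THEN iffD1])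
    then obtain c where c: "c \<in> Field |I|" and iso: "|B a| =o Restr (card_of I) (underS (card_of I) c)"
      by (rule bexE)
    have "|B a| \<le>o Restr (card_of I) (underS (card_of I) c)" using ordIso_iff_ordLeq[THEN iffD1, OF iso] by (rule conjunct1)
    then have "|Field |B a|| \<le>o |Field (Restr (card_of I) (underS (card_of I) c))|"
      by (rule card_of_mono2)
    moreover have "|Field (Restr (card_of I) (underS (card_of I) c))| \<le>o |underS (card_of I) c|"
      by (rule card_of_mono1) (auto simp: Field_def)
    ultimately have "|B a| \<le>o |underS (card_of I) c|" unfolding Field_card_of by (rule ordLeq_transitive)
    moreover have "c \<in> I" using c by (simp only: Field_card_of)
    ultimately show "\<exists>c\<in>I. |B a| \<le>o |underS (card_of I) c|" by (intro bexI)
  qed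
  then have "\<forall>a\<in>A. \<exists>c. c \<in> I \<and> |B a| \<le>o |underS (card_of I) c|" by (simp only: Bex_def)
  then obtain b where b: "\<forall>a\<in>A. b a \<in> I \<and> |B a| \<le>o |underS (card_of I) (b a)|" by (rule bchoice[THEN exE])
  have S1: "b ` A \<subseteq> I" using b by blast
  have S2: "|b ` A| \<le>o cardSuc natLeq" by (rule ordLeq_transitive[OF card_of_image A])
  have "\<not> (\<forall>a\<in>I. \<exists>s\<in>b ` A. (a, s) \<in> card_of I)"
  proof
    assume h: "\<forall>a\<in>I. \<exists>s\<in>b ` A. (a, s) \<in> card_of I"
    have "\<exists>S\<subseteq>I. (card_of S, cardSuc natLeq) \<in> ordLeq \<and> (\<forall>a\<in>I. \<exists>b\<in>S. (a, b) \<in> card_of I)"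
      using S1 S2 h by (intro exI[of _ "b ` A"] conjI)
    then show False using cof unfolding cof_gt_aleph1_def by (elim notE)
  qed
  then obtain a0 where a0: "a0 \<in> I" and na0: "\<forall>s\<in>b ` A. (a0, s) \<notin> card_of I" by blast
  have na: "\<And>s. s \<in> b ` A \<Longrightarrow> (a0, s) \<notin> card_of I" using na0 by blast
  have D: "|underS (card_of I) a0| <o |I|"
    using card_of_underS[OF card_of_Card_order, of a0 I] a0 by (simp add: Field_card_of)
  have sub: "|B a| \<le>o |underS (card_of I) a0|" if aA: "a \<in> A" for a
  proof -
    have ba: "b a \<in> I" and le: "|B a| \<le>o |underS (card_of I) (b a)|" using b aA by auto
    have n1: "(a0, b a) \<notin> card_of I" using na aA by blast
    then have ne: "b a \<noteq> a0" using wo_facts(1)[OF a0] by auto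
    then have r1: "(b a, a0) \<in> card_of I" using wo_facts(3)[OF ba a0] n1 by blast
    have "underS (card_of I) (b a) \<subseteq> underS (card_of I) a0"
    proof
      fix x assume "x \<in> underS (card_of I) (b a)"
      then have x1: "(x, b a) \<in> card_of I" and x2: "x \<noteq> b a" unfolding underS_def by auto
      have "(x, a0) \<in> card_of I" using wo_facts(2)[OF x1 r1] .
      moreover have "x \<noteq> a0" using x1 n1 by blast
      ultimately show "x \<in> underS (card_of I) a0" unfolding underS_def by blast
    qed
    then have "|underS (card_of I) (b a)| \<le>o |underS (card_of I) a0|" by (rule card_of_mono1)
    then show ?thesis by (rule ordLeq_transitive[OF le])
  qed
  have AI: "|A| <o |I|" by (rule ordLeq_ordLess_trans[OF A cof_basic(1)[OF cof]])
  show ?thesis by (rule UN_bound_less[OF cof_basic(3)[OF cof] AI D sub])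
qed


lemma set_lemma:
  fixes I :: "'i set" and X K :: "'i \<Rightarrow> 'v set" and U0 W :: "'v set"
  assumes cof: "cof_gt_aleph1 I"
    and Xc: "\<And>i. i \<in> I \<Longrightarrow> countable (X i)"
    and KX: "\<And>i. i \<in> I \<Longrightarrow> K i \<subseteq> X i" and Kne: "\<And>i. i \<in> I \<Longrightarrow> K i \<noteq> {}"
    and Kd: "\<And>i j. i \<in> I \<Longrightarrow> j \<in> I \<Longrightarrow> i \<noteq> j \<Longrightarrow> K i \<inter> K j = {}"
    and U0c: "countable U0" and U0W: "U0 \<subseteq> W" and XW: "\<And>i. i \<in> I \<Longrightarrow> X i \<subseteq> W"
  shows "\<exists>U J. U0 \<subseteq> U \<and> U \<subseteq> W \<and> |U| <o |I| \<and> J \<subseteq> I \<and> |J| =o |I| \<and>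
     (\<forall>j\<in>J. K j \<inter> U = {}) \<and> (\<forall>i\<in>J. \<forall>j\<in>J. i \<noteq> j \<longrightarrow> (X i - U) \<inter> (X j - U) = {})"
proof (rule ccontr)
  assume H: "\<not> ?thesis"
  define valid where "valid U J \<longleftrightarrow> J \<subseteq> I \<and> (\<forall>j\<in>J. K j \<inter> U = {}) \<and>
     (\<forall>i\<in>J. \<forall>j\<in>J. i \<noteq> j \<longrightarrow> (X i - U) \<inter> (X j - U) = {})" for U J
  define adm where "adm U \<longleftrightarrow> U0 \<subseteq> U \<and> U \<subseteq> W \<and> |U| <o |I|" for U
  have infI: "infinite I" by (rule cof_basic(3)[OF cof])
  have natI: "|UNIV::nat set| <o |I|" by (rule cof_basic(2)[OF cof])
  have cntI: "|A| <o |I|" if "countable A" for A :: "'v set"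
  proof -
    have "|A| \<le>o |UNIV::nat set|" by (rule countable_card_of_nat[THEN iffD1, OF that])
    then show ?thesis by (rule ordLeq_ordLess_trans[OF _ natI])
  qed
  have small: "|J| <o |I|" if a: "adm U" and v: "valid U J" for U J
  proof -
    have "|J| \<le>o |I|" using v unfolding valid_def by (intro card_of_mono1) simp
    moreover have "\<not> |J| =o |I|"
    proof
      assume "|J| =o |I|"
      then have "U0 \<subseteq> U \<and> U \<subseteq> W \<and> |U| <o |I| \<and> J \<subseteq> I \<and> |J| =o |I| \<and>
     (\<forall>j\<in>J. K j \<inter> U = {}) \<and> (\<forall>i\<in>J. \<forall>j\<in>J. i \<noteq> j \<longrightarrow> (X i - U) \<inter> (X j - U) = {})"
        using a v unfolding adm_def valid_def by (simp only: simp_thms, elim conjE, intro conjI)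
      then have "\<exists>U J. U0 \<subseteq> U \<and> U \<subseteq> W \<and> |U| <o |I| \<and> J \<subseteq> I \<and> |J| =o |I| \<and>
     (\<forall>j\<in>J. K j \<inter> U = {}) \<and> (\<forall>i\<in>J. \<forall>j\<in>J. i \<noteq> j \<longrightarrow> (X i - U) \<inter> (X j - U) = {})" by blast
      then show False using H by (rule notE[rotated])
    qed
    ultimately show ?thesis unfolding ordLeq_iff_ordLess_or_ordIso by simp
  qed
  have maxex: "\<exists>J. valid U J \<and> (\<forall>i\<in>I. K i \<inter> U = {} \<longrightarrow> i \<notin> J \<longrightarrow> \<not> valid U (insert i J))" for U
  proof -
    have "\<forall>C\<in>chains {J. valid U J}. \<Union>C \<in> {J. valid U J}"
    proof
      fix C assume C: "C \<in> chains {J. valid U J}"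
      then have Cv: "\<And>J. J \<in> C \<Longrightarrow> valid U J" unfolding chains_def by blast
      have Cc: "\<And>A B. A \<in> C \<Longrightarrow> B \<in> C \<Longrightarrow> A \<subseteq> B \<or> B \<subseteq> A"
        using C unfolding chains_def chain_subset_def by blast
      have "valid U (\<Union>C)" unfolding valid_def
      proof (intro conjI ballI impI)
        show "\<Union>C \<subseteq> I" using Cv unfolding valid_def by blast
        show "K j \<inter> U = {}" if "j \<in> \<Union>C" for j using Cv that unfolding valid_def by blast
        show "(X i - U) \<inter> (X j - U) = {}" if ij: "i \<in> \<Union>C" "j \<in> \<Union>C" "i \<noteq> j" for i j
        proof -
          obtain A B where A: "A \<in> C" "i \<in> A" and B: "B \<in> C" "j \<in> B" using ij(1,2) by blast
          then have "i \<in> A \<union> B \<and> j \<in> A \<union> B" by blast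
          moreover have "A \<union> B = A \<or> A \<union> B = B" using Cc[OF A(1) B(1)] by blast
          moreover have "valid U A" "valid U B" using Cv A B by auto
          ultimately show ?thesis using ij(3) unfolding valid_def by metis
        qed
      qed
      then show "\<Union>C \<in> {J. valid U J}" by simp
    qed
    then obtain M where M: "valid U M" and Mm: "\<And>J. valid U J \<Longrightarrow> M \<subseteq> J \<Longrightarrow> J = M"
      using Zorn_Lemma[of "{J. valid U J}"] by blast
    show ?thesis
    proof (intro exI conjI ballI impI)
      show "valid U M" by (rule M)
      fix i assume "i \<in> I" "K i \<inter> U = {}" "i \<notin> M"
      then show "\<not> valid U (insert i M)" using Mm[of "insert i M"] by blast
    qed
  qed
  define Jm where "Jm U = (SOME J. valid U J \<and> (\<forall>i\<in>I. K i \<inter> U = {} \<longrightarrow> i \<notin> J \<longrightarrow> \<not> valid U (insert i J)))" for U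
  have Jm: "valid U (Jm U) \<and> (\<forall>i\<in>I. K i \<inter> U = {} \<longrightarrow> i \<notin> Jm U \<longrightarrow> \<not> valid U (insert i (Jm U)))" for U
    unfolding Jm_def by (rule someI_ex[OF maxex])
  define step where "step U = U \<union> (\<Union>j\<in>Jm U. X j)" for U
  have step_sub: "U \<subseteq> step U" for U unfolding step_def by blast
  have step_adm: "adm (step U)" if a: "adm U" for U
  proof -
    have JI: "Jm U \<subseteq> I" using Jm[of U] unfolding valid_def by blast
    have "|\<Union>j\<in>Jm U. X j| <o |I|"
    proof (rule UN_bound_less[OF infI small[OF a] natI])
      show "valid U (Jm U)" using Jm by blast
      fix j assume "j \<in> Jm U"
      then have "countable (X j)" using JI Xc by blast
      then show "|X j| \<le>o |UNIV::nat set|" by (rule countable_card_of_nat[THEN iffD1])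
    qed
    moreover have "|U| <o |I|" using a unfolding adm_def by simp
    ultimately have "|step U| <o |I|" unfolding step_def by (intro card_of_Un_ordLess_infinite[OF infI])
    moreover have "U0 \<subseteq> step U" "step U \<subseteq> W" using a JI XW unfolding adm_def step_def by auto
    ultimately show ?thesis unfolding adm_def by simp
  qed
  have step_hit: "X i \<inter> (step U - U) \<noteq> {}" if iI: "i \<in> I" and Ki: "K i \<inter> step U = {}" for i U
  proof -
    have KU: "K i \<inter> U = {}" using Ki step_sub by blast
    have niJ: "i \<notin> Jm U"
    proof
      assume "i \<in> Jm U"
      then have "X i \<subseteq> step U" unfolding step_def by blast
      then show False using KX[OF iI] Kne[OF iI] Ki by blast
    qed
    have nv: "\<not> valid U (insert i (Jm U))" using Jm iI KU niJ by blast
    have v: "valid U (Jm U)" using Jm by blast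
    have "\<exists>j\<in>Jm U. (X i - U) \<inter> (X j - U) \<noteq> {}"
    proof (rule ccontr)
      assume "\<not> ?thesis"
      then have d: "\<And>j. j \<in> Jm U \<Longrightarrow> (X i - U) \<inter> (X j - U) = {}" by blast
      have "valid U (insert i (Jm U))" unfolding valid_def
      proof (intro conjI ballI impI)
        show "insert i (Jm U) \<subseteq> I" using v iI unfolding valid_def by blast
        show "K j \<inter> U = {}" if "j \<in> insert i (Jm U)" for j using v KU that unfolding valid_def by blast
        show "(X a - U) \<inter> (X b - U) = {}" if "a \<in> insert i (Jm U)" "b \<in> insert i (Jm U)" "a \<noteq> b" for a b
          using that d v unfolding valid_def by blast
      qed
      then show False using nv by blast
    qed
    then show ?thesis unfolding step_def by blast
  qed
  define r where "r = cardSuc natLeq"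
  have CS: "Card_order r" unfolding r_def by (rule cardSuc_Card_order[OF natLeq_Card_order])
  have WS: "Well_order r" using CS card_order_on_well_order_on by blast
  have wf: "wf (r - Id)" using WS unfolding well_order_on_def by simp
  have tot: "\<And>x y. x \<in> Field r \<Longrightarrow> y \<in> Field r \<Longrightarrow> x \<noteq> y \<Longrightarrow> (x, y) \<in> r \<or> (y, x) \<in> r"
    using WS unfolding well_order_on_def linear_order_on_def total_on_def by blast
  have Fr: "|Field r| =o r" by (rule card_of_Field_ordIso[OF CS])
  have uS: "|underS r x| \<le>o cardSuc natLeq" for x
  proof -
    have "|underS r x| \<le>o |Field r|" by (rule card_of_mono1, rule subsetI, erule underS_Field)
    then show ?thesis unfolding r_def[symmetric] by (rule ordLeq_ordIso_trans[OF _ Fr])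
  qed
  define Uf where "Uf = wfrec (r - Id) (\<lambda>g x. U0 \<union> (\<Union>y\<in>underS r x. step (g y)))"
  have Uf_eq: "Uf x = U0 \<union> (\<Union>y\<in>underS r x. step (Uf y))" for x
  proof -
    have "Uf x = U0 \<union> (\<Union>y\<in>underS r x. step (cut Uf (r - Id) x y))"
      unfolding Uf_def by (subst wfrec[OF wf]) simp
    also have "(\<Union>y\<in>underS r x. step (cut Uf (r - Id) x y)) = (\<Union>y\<in>underS r x. step (Uf y))"
      by (rule SUP_cong[OF refl]) (simp add: cut_apply underS_def)
    finally show ?thesis .
  qed
  have Uf_adm: "adm (Uf x)" for x
  proof (induction x rule: wf_induct_rule[OF wf])
    case (1 x)
    have sa: "adm (step (Uf y))" if "y \<in> underS r x" for y
      using 1 that step_adm unfolding underS_def by blast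
    have "|\<Union>y\<in>underS r x. step (Uf y)| <o |I|"
      by (rule UN_small[OF cof uS]) (use sa in \<open>simp add: adm_def\<close>)
    then have "|Uf x| <o |I|" unfolding Uf_eq[of x] by (intro card_of_Un_ordLess_infinite[OF infI cntI[OF U0c]])
    moreover have "U0 \<subseteq> Uf x" by (subst Uf_eq) blast
    moreover have "Uf x \<subseteq> W" using sa U0W unfolding adm_def by (subst Uf_eq) blast
    ultimately show ?case unfolding adm_def by simp
  qed
  define Ufin where "Ufin = U0 \<union> (\<Union>x\<in>Field r. step (Uf x))"
  have "|Field r| \<le>o cardSuc natLeq" using ordIso_iff_ordLeq[THEN iffD1, OF Fr] unfolding r_def by (rule conjunct1)
  then have "|\<Union>x\<in>Field r. step (Uf x)| <o |I|"
    by (rule UN_small[OF cof]) (use step_adm Uf_adm in \<open>simp add: adm_def\<close>)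
  then have Ufin_small: "|Ufin| <o |I|" unfolding Ufin_def by (intro card_of_Un_ordLess_infinite[OF infI cntI[OF U0c]])
  have "\<exists>i\<in>I. K i \<inter> Ufin = {}"
  proof (rule ccontr)
    assume "\<not> ?thesis"
    then have "\<forall>i\<in>I. K i \<inter> Ufin \<noteq> {}" by simp
    then have "\<forall>i\<in>I. \<exists>v. v \<in> K i \<inter> Ufin" by (simp only: ex_in_conv)
    then obtain f where f: "\<forall>i\<in>I. f i \<in> K i \<inter> Ufin" by (rule bchoice[THEN exE])
    have "inj_on f I"
    proof (rule inj_onI)
      fix a b assume ab: "a \<in> I" "b \<in> I" "f a = f b"
      show "a = b"
      proof (rule ccontr)
        assume "a \<noteq> b"
        then have "K a \<inter> K b = {}" using Kd ab(1,2) by simp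
        moreover have "f a \<in> K a" "f b \<in> K b" using f ab(1,2) by auto
        ultimately show False using ab(3) by auto
      qed
    qed
    moreover have "f ` I \<subseteq> Ufin" using f by blast
    ultimately have "|I| \<le>o |Ufin|" unfolding card_of_ordLeq[symmetric] by (intro exI conjI)
    then show False using not_ordLess_ordLeq[OF Ufin_small] by (rule notE[rotated])
  qed
  then obtain i where iI: "i \<in> I" and Ki: "K i \<inter> Ufin = {}" by blast
  have "\<forall>x\<in>Field r. \<exists>v. v \<in> X i \<inter> (step (Uf x) - Uf x)"
  proof
    fix x assume "x \<in> Field r"
    then have "K i \<inter> step (Uf x) = {}" using Ki unfolding Ufin_def by blast
    then show "\<exists>v. v \<in> X i \<inter> (step (Uf x) - Uf x)" using step_hit[OF iI] by blast
  qed
  then obtain g where g: "\<forall>x\<in>Field r. g x \<in> X i \<inter> (step (Uf x) - Uf x)" by (rule bchoice[THEN exE])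
  have lt: "g x \<noteq> g y" if "x \<in> Field r" "y \<in> Field r" "(x, y) \<in> r" "x \<noteq> y" for x y
  proof -
    have "x \<in> underS r y" using that unfolding underS_def by blast
    then have sub: "step (Uf x) \<subseteq> Uf y" unfolding Uf_eq[of y] by blast
    have "g x \<in> step (Uf x)" "g y \<notin> Uf y" using g that(1,2) by auto
    then show ?thesis using sub by auto
  qed
  have "inj_on g (Field r)"
  proof (rule inj_onI)
    fix x y assume xy: "x \<in> Field r" "y \<in> Field r" "g x = g y"
    show "x = y"
    proof (rule ccontr)
      assume "x \<noteq> y"
      then have "(x, y) \<in> r \<or> (y, x) \<in> r" by (rule tot[OF xy(1,2)])
      then show False
      proof
        assume "(x, y) \<in> r"
        then have "g x \<noteq> g y" using lt[OF xy(1,2)] \<open>x \<noteq> y\<close> by simp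
        then show False using xy(3) by simp
      next
        assume "(y, x) \<in> r"
        then have "g y \<noteq> g x" using lt[OF xy(2,1)] \<open>x \<noteq> y\<close> by simp
        then show False using xy(3) by simp
      qed
    qed
  qed
  moreover have "g ` Field r \<subseteq> X i" using g by blast
  ultimately have "|Field r| \<le>o |X i|" unfolding card_of_ordLeq[symmetric] by (intro exI conjI)
  moreover have "|X i| \<le>o |UNIV::nat set|" by (rule countable_card_of_nat[THEN iffD1, OF Xc[OF iI]])
  ultimately have "|Field r| \<le>o |UNIV::nat set|" by (rule ordLeq_transitive)
  then have "|Field r| \<le>o natLeq" by (rule ordLeq_ordIso_trans[OF _ card_of_nat])
  moreover have nl: "natLeq <o |Field r|"
    using Fr unfolding r_def by (rule ordLess_ordIso_trans[OF cardSuc_greater[OF natLeq_Card_order] ordIso_symmetric])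
  ultimately show False using not_ordLess_ordLeq[OF nl] by simp
qed



lemma is_path_rev:
  assumes g: "graph V E" and p: "is_path V E p"
  shows "is_path V E (rev p)"
  unfolding is_path_def
proof (intro conjI allI impI)
  show "rev p \<noteq> []" "distinct (rev p)" "set (rev p) \<subseteq> V" using p unfolding is_path_def by auto
  fix i assume i: "Suc i < length (rev p)"
  define j where "j = length p - Suc (Suc i)"
  have j1: "Suc j < length p" and j2: "length p - Suc i = Suc j" using i unfolding j_def by auto
  have "E (p ! j) (p ! Suc j)" using p j1 unfolding is_path_def by blast
  then have "E (p ! Suc j) (p ! j)" using g unfolding graph_def by blast
  moreover have "rev p ! i = p ! Suc j" using i j2 by (simp add: rev_nth)
  moreover have "rev p ! Suc i = p ! j" using i unfolding j_def by (simp add: rev_nth)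
  ultimately show "E (rev p ! i) (rev p ! Suc i)" by simp
qed

definition trunc :: "'v set \<Rightarrow> 'v list \<Rightarrow> 'v list" where
  "trunc U q = take (Suc (LEAST k. k < length q \<and> q ! k \<in> U)) q"

lemma trunc_props:
  assumes p: "is_path V E q" and l: "last q \<in> U"
  shows "is_path V E (trunc U q)" "set (trunc U q) \<subseteq> set q" "hd (trunc U q) = hd q"
    "set (trunc U q) \<inter> U = {last (trunc U q)}"
proof -
  have ne: "q \<noteq> []" using p unfolding is_path_def by simp
  define k where "k = (LEAST k. k < length q \<and> q ! k \<in> U)"
  have ex: "length q - 1 < length q \<and> q ! (length q - 1) \<in> U" using ne l by (simp add: last_conv_nth)
  have k: "k < length q \<and> q ! k \<in> U" unfolding k_def by (rule LeastI[of "\<lambda>k. k < length q \<and> q ! k \<in> U", OF ex])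
  have kmin: "\<And>j. j < k \<Longrightarrow> q ! j \<notin> U"
  proof -
    fix j assume "j < k"
    then have "\<not> (j < length q \<and> q ! j \<in> U)" unfolding k_def by (rule not_less_Least)
    then show "q ! j \<notin> U" using \<open>j < k\<close> k by auto
  qed
  have t: "trunc U q = take (Suc k) q" unfolding trunc_def k_def by simp
  have len: "length (take (Suc k) q) = Suc k" using k by simp
  have nth: "\<And>j. j < Suc k \<Longrightarrow> take (Suc k) q ! j = q ! j" by simp
  show "is_path V E (trunc U q)" unfolding t is_path_def
  proof (intro conjI allI impI)
    show "take (Suc k) q \<noteq> []" using ne by simp
    show "distinct (take (Suc k) q)" using p unfolding is_path_def by simp
    show "set (take (Suc k) q) \<subseteq> V" using p set_take_subset unfolding is_path_def by fast
    fix i assume i: "Suc i < length (take (Suc k) q)"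
    then have "Suc i < length q" using k by simp
    then have "E (q ! i) (q ! Suc i)" using p unfolding is_path_def by blast
    then show "E (take (Suc k) q ! i) (take (Suc k) q ! Suc i)" using i len by simp
  qed
  show "set (trunc U q) \<subseteq> set q" unfolding t by (rule set_take_subset)
  show "hd (trunc U q) = hd q" unfolding t using ne by (simp add: hd_take)
  have lastt: "last (take (Suc k) q) = q ! k"
  proof -
    have "take (Suc k) q \<noteq> []" using ne by simp
    then have "last (take (Suc k) q) = take (Suc k) q ! (length (take (Suc k) q) - 1)" by (rule last_conv_nth)
    also have "\<dots> = q ! k" using len by simp
    finally show ?thesis .
  qed
  show "set (trunc U q) \<inter> U = {last (trunc U q)}" unfolding t lastt
  proof
    show "set (take (Suc k) q) \<inter> U \<subseteq> {q ! k}"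
    proof
      fix v assume v: "v \<in> set (take (Suc k) q) \<inter> U"
      then obtain j where j: "j < length (take (Suc k) q)" "take (Suc k) q ! j = v" by (auto simp: in_set_conv_nth)
      then have "j < Suc k" using len by simp
      then have "q ! j = v" using j nth by simp
      then have "\<not> j < k" using kmin v by blast
      then have "j = k" using \<open>j < Suc k\<close> by simp
      then show "v \<in> {q ! k}" using \<open>q ! j = v\<close> by simp
    qed
    have "q ! k \<in> set (take (Suc k) q)" using k by (simp add: in_set_conv_nth) (metis len lessI nth)
    then show "{q ! k} \<subseteq> set (take (Suc k) q) \<inter> U" using k by simp
  qed
qed



theorem lemma2p2:
  fixes V :: "'v set" and E :: "'v \<Rightarrow> 'v \<Rightarrow> bool"
    and \<epsilon> :: "(nat \<Rightarrow> 'v) set" and \<R> :: "(nat \<Rightarrow> 'v) set"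
  assumes "graph V E"
    and "is_end V E \<epsilon>"
    and "cof_gt_aleph1 \<R>"
    and "\<R> \<subseteq> \<epsilon>"
    and "\<forall>R\<in>\<R>. \<forall>R'\<in>\<R>. R \<noteq> R' \<longrightarrow> range R \<inter> range R' = {}"
  shows "\<exists>U \<C>. U \<subseteq> V \<and> (card_of U, card_of \<R>) \<in> ordLess \<and>
     (card_of \<C>, card_of \<R>) \<in> ordIso \<and>
     (\<forall>C\<in>\<C>. is_comb V E \<epsilon> U C \<and> fst C \<in> \<R>) \<and>
     (\<forall>C\<in>\<C>. \<forall>D\<in>\<C>. C \<noteq> D \<longrightarrow> comb_interior U C \<inter> comb_interior U D = {})"
proof -
  note g = assms(1)
  obtain Rb where Rb: "is_ray V E Rb" and eps: "\<epsilon> = {R. is_ray V E R \<and> rays_equiv V E Rb R}"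
    using assms(2) unfolding is_end_def by blast
  have "\<forall>R\<in>\<R>. \<exists>P. infinite P \<and> disjoint_paths P \<and> (\<forall>p\<in>P. AB_path V E (range Rb) (range R) p)"
    using assms(4) unfolding eps rays_equiv_def by blast
  then obtain Pf where Pf: "\<forall>R\<in>\<R>. infinite (Pf R) \<and> disjoint_paths (Pf R) \<and> (\<forall>p\<in>Pf R. AB_path V E (range Rb) (range R) p)"
    by (rule bchoice[THEN exE])
  have Pinf: "\<And>R. R \<in> \<R> \<Longrightarrow> infinite (Pf R)" using Pf by blast
  have Pdis: "\<And>R p q. R \<in> \<R> \<Longrightarrow> p \<in> Pf R \<Longrightarrow> q \<in> Pf R \<Longrightarrow> p \<noteq> q \<Longrightarrow> set p \<inter> set q = {}"
    using Pf unfolding disjoint_paths_def by blast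
  have PAB: "\<And>R p. R \<in> \<R> \<Longrightarrow> p \<in> Pf R \<Longrightarrow> AB_path V E (range Rb) (range R) p" using Pf by blast
  have Ppath: "\<And>R p. R \<in> \<R> \<Longrightarrow> p \<in> Pf R \<Longrightarrow> is_path V E p" using PAB unfolding AB_path_def by blast
  have Pne: "\<And>R p. R \<in> \<R> \<Longrightarrow> p \<in> Pf R \<Longrightarrow> p \<noteq> []" using Ppath unfolding is_path_def by blast
  have Pb: "\<And>R p. R \<in> \<R> \<Longrightarrow> p \<in> Pf R \<Longrightarrow> set p \<inter> range Rb = {hd p}" using PAB unfolding AB_path_def by blast
  have Pe: "\<And>R p. R \<in> \<R> \<Longrightarrow> p \<in> Pf R \<Longrightarrow> set p \<inter> range R = {last p}" using PAB unfolding AB_path_def by blast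
  have ray: "\<And>R. R \<in> \<R> \<Longrightarrow> is_ray V E R" using assms(4) unfolding eps by blast
  define X where "X R = range R \<union> (\<Union>p\<in>Pf R. set p)" for R
  have Xc: "countable (X R)" if R: "R \<in> \<R>" for R
  proof -
    have "inj_on last (Pf R)"
    proof (rule inj_onI)
      fix p q assume pq: "p \<in> Pf R" "q \<in> Pf R" "last p = last q"
      show "p = q"
      proof (rule ccontr)
        assume "p \<noteq> q"
        then have "set p \<inter> set q = {}" using Pdis R pq by blast
        moreover have "last p \<in> set p" "last q \<in> set q" using Pne[OF R pq(1)] Pne[OF R pq(2)] by simp_all
        ultimately show False using pq(3) by auto
      qed
    qed
    moreover have "last ` Pf R \<subseteq> range R" using Pe R by blast
    then have "countable (last ` Pf R)" by (rule countable_subset) simp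
    ultimately have "countable (Pf R)" by (metis countable_image_inj_on)
    then show ?thesis unfolding X_def by (intro countable_Un countable_UN) (auto intro: countable_finite)
  qed
  have XV: "X R \<subseteq> V" if R: "R \<in> \<R>" for R
    using ray[OF R] Ppath[OF R] unfolding X_def is_ray_def is_path_def by blast
  have RbV: "range Rb \<subseteq> V" using Rb unfolding is_ray_def by blast
  obtain U J where U0: "range Rb \<subseteq> U" and UV: "U \<subseteq> V" and Us: "|U| <o |\<R>|" and JR: "J \<subseteq> \<R>"
    and Js: "|J| =o |\<R>|" and JK: "\<forall>j\<in>J. range j \<inter> U = {}"
    and Jd: "\<forall>i\<in>J. \<forall>j\<in>J. i \<noteq> j \<longrightarrow> (X i - U) \<inter> (X j - U) = {}"
  proof -
    have KX: "\<And>i. i \<in> \<R> \<Longrightarrow> range i \<subseteq> X i" unfolding X_def by blast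
    have Kne: "\<And>i. i \<in> \<R> \<Longrightarrow> range i \<noteq> {}" by simp
    have Kd: "\<And>i j. i \<in> \<R> \<Longrightarrow> j \<in> \<R> \<Longrightarrow> i \<noteq> j \<Longrightarrow> range i \<inter> range j = {}"
      using assms(5) by blast
    have cb: "countable (range Rb)" by simp
    have "\<exists>U J. range Rb \<subseteq> U \<and> U \<subseteq> V \<and> |U| <o |\<R>| \<and> J \<subseteq> \<R> \<and> |J| =o |\<R>| \<and>
     (\<forall>j\<in>J. range j \<inter> U = {}) \<and> (\<forall>i\<in>J. \<forall>j\<in>J. i \<noteq> j \<longrightarrow> (X i - U) \<inter> (X j - U) = {})"
      by (rule set_lemma[OF assms(3)]) (simp_all add: Xc KX Kd RbV XV)
    then show ?thesis by (elim exE conjE) (rule that)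
  qed
  define T where "T R = (\<lambda>p. trunc U (rev p)) ` Pf R" for R
  define \<C> where "\<C> = (\<lambda>R. (R, T R)) ` J"
  have tr: "is_path V E (trunc U (rev p)) \<and> set (trunc U (rev p)) \<subseteq> set p \<and>
      hd (trunc U (rev p)) = last p \<and> set (trunc U (rev p)) \<inter> U = {last (trunc U (rev p))}"
    if R: "R \<in> \<R>" and p: "p \<in> Pf R" for R p
  proof -
    have rp: "is_path V E (rev p)" by (rule is_path_rev[OF g Ppath[OF R p]])
    have "hd p \<in> range Rb" using Pb[OF R p] by blast
    then have "last (rev p) \<in> U" using U0 Pne[OF R p] by (auto simp add: last_rev)
    note tp = trunc_props[OF rp this]
    have "hd (rev p) = last p" using Pne[OF R p] by (simp add: hd_rev)
    then show ?thesis using tp by simp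
  qed
  have comb: "is_comb V E \<epsilon> U (R, T R)" and int: "comb_interior U (R, T R) \<subseteq> X R - U" if R: "R \<in> J" for R
  proof -
    have RR: "R \<in> \<R>" using R JR by blast
    have tne: "trunc U (rev p) \<noteq> []" if "p \<in> Pf R" for p using tr[OF RR that] unfolding is_path_def by blast
    have inj: "inj_on (\<lambda>p. trunc U (rev p)) (Pf R)"
    proof (rule inj_onI)
      fix p q assume pq: "p \<in> Pf R" "q \<in> Pf R" "trunc U (rev p) = trunc U (rev q)"
      show "p = q"
      proof (rule ccontr)
        assume "p \<noteq> q"
        then have d: "set p \<inter> set q = {}" by (rule Pdis[OF RR pq(1,2)])
        have s1: "set (trunc U (rev p)) \<subseteq> set p" using tr[OF RR pq(1)] by (elim conjE)
        have s2: "set (trunc U (rev q)) \<subseteq> set q" using tr[OF RR pq(2)] by (elim conjE)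
        obtain x where x: "x \<in> set (trunc U (rev p))" using tne[OF pq(1)] by (cases "trunc U (rev p)") auto
        have "x \<in> set p" using x s1 by (rule rev_subsetD)
        moreover have "x \<in> set q" using x s2 unfolding pq(3) by (rule rev_subsetD)
        ultimately show False using d by (simp add: disjoint_iff)
      qed
    qed
    show "is_comb V E \<epsilon> U (R, T R)" unfolding is_comb_def prod.case
    proof (intro conjI ballI)
      show "R \<in> \<epsilon>" using RR assms(4) by blast
      show "range R \<inter> U = {}" using JK R by blast
      show "infinite (T R)" unfolding T_def using finite_imageD[OF _ inj] Pinf[OF RR] by blast
      show "disjoint_paths (T R)" unfolding disjoint_paths_def T_def
      proof (intro ballI impI)
        fix a b assume a: "a \<in> (\<lambda>p. trunc U (rev p)) ` Pf R" and b: "b \<in> (\<lambda>p. trunc U (rev p)) ` Pf R" and ab: "a \<noteq> b"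
        obtain p where p: "p \<in> Pf R" "a = trunc U (rev p)" using a by blast
        obtain q where q: "q \<in> Pf R" "b = trunc U (rev q)" using b by blast
        have "p \<noteq> q" using p q ab by blast
        then have "set p \<inter> set q = {}" by (rule Pdis[OF RR p(1) q(1)])
        moreover have "set a \<subseteq> set p" "set b \<subseteq> set q" using tr[OF RR p(1)] tr[OF RR q(1)] p(2) q(2) by auto
        ultimately show "set a \<inter> set b = {}" by blast
      qed
      fix t assume "t \<in> T R"
      then obtain p where p: "p \<in> Pf R" "t = trunc U (rev p)" unfolding T_def by blast
      have t1: "is_path V E t" "set t \<subseteq> set p" "hd t = last p" "set t \<inter> U = {last t}" using tr[OF RR p(1)] p(2) by auto
      have "t \<noteq> []" using t1(1) unfolding is_path_def by blast
      then have "hd t \<in> set t" by simp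
      moreover have "last p \<in> range R" using Pe[OF RR p(1)] by blast
      ultimately have h1: "hd t \<in> set t \<inter> range R" using t1(3) by simp
      have "set t \<inter> range R \<subseteq> set p \<inter> range R" using t1(2) by blast
      then have "set t \<inter> range R \<subseteq> {hd t}" using Pe[OF RR p(1)] t1(3) by simp
      then have "set t \<inter> range R = {hd t}" using h1 by blast
      then show "AB_path V E (range R) U t" unfolding AB_path_def using t1 by blast
    qed
    show "comb_interior U (R, T R) \<subseteq> X R - U"
      unfolding comb_interior_def prod.case X_def T_def using tr[OF RR] by fastforce
  qed
  show ?thesis
  proof (intro exI conjI)
    show "U \<subseteq> V" by (rule UV)
    show "|U| <o |\<R>|" by (rule Us)
    have "bij_betw (\<lambda>R. (R, T R)) J \<C>" unfolding \<C>_def by (rule inj_on_imp_bij_betw) (auto simp: inj_on_def)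
    then have "|J| =o |\<C>|" using card_of_ordIso by blast
    then have "|\<C>| =o |J|" by (rule ordIso_symmetric)
    then show "|\<C>| =o |\<R>|" by (rule ordIso_transitive[OF _ Js])
    show "\<forall>C\<in>\<C>. is_comb V E \<epsilon> U C \<and> fst C \<in> \<R>" unfolding \<C>_def using comb JR by auto
    show "\<forall>C\<in>\<C>. \<forall>D\<in>\<C>. C \<noteq> D \<longrightarrow> comb_interior U C \<inter> comb_interior U D = {}"
    proof (intro ballI impI)
      fix C D assume C: "C \<in> \<C>" and D: "D \<in> \<C>" and CD: "C \<noteq> D"
      obtain R where R: "R \<in> J" "C = (R, T R)" using C unfolding \<C>_def by blast
      obtain R' where R': "R' \<in> J" "D = (R', T R')" using D unfolding \<C>_def by blast
      have "R \<noteq> R'" using CD R R' by blast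
      then have "(X R - U) \<inter> (X R' - U) = {}" using Jd R(1) R'(1) by blast
      then show "comb_interior U C \<inter> comb_interior U D = {}" using int[OF R(1)] int[OF R'(1)] R(2) R'(2) by blast
    qed
  qed
qed

end
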